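(* Let $n,r\ge1$, $\lambda\in\Lambda_\vartriangle(n,r)$ and $d\in\mathscr D^\vartriangle_\lambda$, and let $\mathbf i=\mathbf i_\lambda d$. If $d^+$ denotes the element of maximal length in the coset $\mathfrak S_\lambda d$, then $|\mathrm{Inv}(\mathbf i)|=\ell(d^+)$, where $\mathrm{Inv}(\mathbf i)=\{(s,t)\in\mathbb Z^2\mid 1\le s\le r,\ s<t,\ i_s\ge i_t\}$.
   Context: The affine symmetric group $\mathfrak S_{\vartriangle,r}$ is the group (under composition) of bijections $w:\mathbb Z\to\mathbb Z$ with $w(i+r)=w(i)+r$. It contains $s_i$ ($1\le i\le r$): $s_i(j)=j$ if $j\not\equiv i,i+1\pmod r$, $s_i(j)=j-1$ if $j\equiv i+1$, $s_i(j)=j+1$ if $j\equiv i$; and $\rho:j\mapsto j+1$. The $s_i$ generate a Coxeter group $W$ with length function $\ell$, every element is uniquely $\rho^aw'$ ($w'\in W$), and one sets $\ell(\rho^aw')=\ell(w')$. $\Lambda_\vartriangle(n,r)$ is the set of $\lambda=(\lambda_i)_{i\in\mathbb Z}$ with $\lambda_i\in\mathbb N$, $\lambda_{i+n}=\lambda_i$, $\lambda_1+\dots+\lambda_n=r$. For $1\le i\le n$, $k\in\mathbb Z$ put $\lambda_{k,i-1}=kr+\sum_{t=1}^{i-1}\lambda_t$ and $R^\lambda_{i+kn}=\{\lambda_{k,i-1}+1,\dots,\lambda_{k,i-1}+\lambda_i\}$. $\mathfrak S_\lambda$ is the standard Young subgroup $\mathfrak S_{(\lambda_1,\dots,\lambda_n)}$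 of $\mathfrak S_r$, viewed in $\mathfrak S_{\vartriangle,r}$ by periodic extension, and $\mathscr D^\vartriangle_\lambda=\{d\mid \ell(wd)=\ell(w)+\ell(d)\ \forall w\in\mathfrak S_\lambda\}$. Let $I_\vartriangle(n,r)$ be the set of integer sequences $\mathbf i=(i_k)_{k\in\mathbb Z}$ with $i_{k+r}=i_k+n$; $\mathfrak S_{\vartriangle,r}$ acts on it on the right by $(\mathbf iw)_k=i_{w(k)}$. $\mathbf i_\lambda\in I_\vartriangle(n,r)$ is the sequence with $(\mathbf i_\lambda)_s=m$ for all $s\in R^\lambda_m$, $m\in\mathbb Z$. *)

theory Defs
  imports Main
begin

definition aff_perm :: "nat \<Rightarrow> (int \<Rightarrow> int) \<Rightarrow> bool" where
  "aff_perm r w \<longleftrightarrow> bij w \<and> (\<forall>i. w (i + int r) = w i + int r)"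

(* simple reflection s_i (1 \<le> i \<le> r); for r = 1 the defining congruence
   conditions coincide and we take s_1 = id (W is trivial) *)
definition sref :: "nat \<Rightarrow> int \<Rightarrow> int \<Rightarrow> int" where
  "sref r i j =
     (if r \<le> 1 then j
      else if j mod int r = i mod int r then j + 1
      else if j mod int r = (i + 1) mod int r then j - 1
      else j)"

definition rho_pow :: "int \<Rightarrow> int \<Rightarrow> int" where
  "rho_pow a = (\<lambda>j. j + a)"

definition word_prod :: "nat \<Rightarrow> int list \<Rightarrow> int \<Rightarrow> int" where
  "word_prod r ws = foldr (\<circ>) (map (sref r) ws) id"

(* length: l(rho^a w') = l(w'), the Coxeter length of w' in W = <s_1..s_r> *)
definition aff_len :: "nat \<Rightarrow> (int \<Rightarrow> int) \<Rightarrow> nat" where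
  "aff_len r w = (LEAST k. \<exists>a ws. length ws = k \<and> set ws \<subseteq> {1..int r}
                        \<and> w = rho_pow a \<circ> word_prod r ws)"

definition Lam :: "nat \<Rightarrow> nat \<Rightarrow> (int \<Rightarrow> nat) set" where
  "Lam n r = {lam. (\<forall>i. lam (i + int n) = lam i) \<and> (\<Sum>t=1..int n. lam t) = r}"

definition lam_off :: "nat \<Rightarrow> (int \<Rightarrow> nat) \<Rightarrow> int \<Rightarrow> int \<Rightarrow> int" where
  "lam_off r lam k i = k * int r + (\<Sum>t=1..i - 1. int (lam t))"

definition Rblock :: "nat \<Rightarrow> nat \<Rightarrow> (int \<Rightarrow> nat) \<Rightarrow> int \<Rightarrow> int set" where
  "Rblock n r lam m =
     (let k = (m - 1) div int n; i = (m - 1) mod int n + 1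
      in {lam_off r lam k i + 1 .. lam_off r lam k i + int (lam i)})"

definition i_lam :: "nat \<Rightarrow> nat \<Rightarrow> (int \<Rightarrow> nat) \<Rightarrow> int \<Rightarrow> int" where
  "i_lam n r lam s = (THE m. s \<in> Rblock n r lam m)"

definition seq_act :: "(int \<Rightarrow> int) \<Rightarrow> (int \<Rightarrow> int) \<Rightarrow> int \<Rightarrow> int" where
  "seq_act ii w = ii \<circ> w"

(* Young subgroup S_lambda of S_r, periodically extended to Z *)
definition Young :: "nat \<Rightarrow> nat \<Rightarrow> (int \<Rightarrow> nat) \<Rightarrow> (int \<Rightarrow> int) set" where
  "Young n r lam = {w. aff_perm r w \<and>
      (\<forall>i\<in>{1..int n}. \<forall>j\<in>Rblock n r lam i. w j \<in> Rblock n r lam i)}"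

definition Dmin :: "nat \<Rightarrow> nat \<Rightarrow> (int \<Rightarrow> nat) \<Rightarrow> (int \<Rightarrow> int) set" where
  "Dmin n r lam = {d. aff_perm r d \<and>
      (\<forall>w\<in>Young n r lam. aff_len r (w \<circ> d) = aff_len r w + aff_len r d)}"

definition Inv :: "nat \<Rightarrow> (int \<Rightarrow> int) \<Rightarrow> (int \<times> int) set" where
  "Inv r ii = {(s, t). 1 \<le> s \<and> s \<le> int r \<and> s < t \<and> ii s \<ge> ii t}"

end

theory Submission
  imports Defs
begin

definition invs :: "nat \<Rightarrow> (int \<Rightarrow> int) \<Rightarrow> (int \<times> int) set" where
  "invs r u = {(s,t). 1 \<le> s \<and> s \<le> int r \<and> s < t \<and> u t < u s}"

lemma aff_perm_period:
  assumes "aff_perm r w" shows "w (x + k * int r) = w x + k * int r"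
proof (induction k rule: int_induct[where k=0])
  case base then show ?case by simp
next
  case (step1 i)
  have "w (x + (i+1) * int r) = w ((x + i * int r) + int r)" by (simp add: algebra_simps)
  also have "\<dots> = w (x + i * int r) + int r" using assms unfolding aff_perm_def by blast
  finally show ?case using step1 by (simp add: algebra_simps)
next
  case (step2 i)
  have "w (x + i * int r) = w ((x + (i - 1) * int r) + int r)" by (simp add: algebra_simps)
  also have "\<dots> = w (x + (i - 1) * int r) + int r" using assms unfolding aff_perm_def by blast
  finally show ?case using step2 by (simp add: algebra_simps)
qed

lemma sref_alt:
  assumes "r \<ge> 2"
  shows "sref r i j = (if int r dvd (j - i) then j + 1 else if int r dvd (j - i - 1) then j - 1 else j)"
  using assms unfolding sref_def by (simp add: mod_eq_dvd_iff algebra_simps)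

lemma dvd_two_adj:
  assumes "r \<ge> 2" "int r dvd u" "int r dvd v" "v = u + 1 \<or> v = u - 1"
  shows False
proof -
  have "int r dvd 1" using assms(2,3,4) by (metis add_diff_cancel_left' diff_diff_eq2 diff_minus_eq_add dvd_diff dvd_minus_iff)
  then have "int r \<le> 1" using zdvd_imp_le by simp
  then show False using assms(1) by simp
qed

lemma sref_inv:
  assumes "r \<ge> 1" shows "sref r i (sref r i j) = j"
proof (cases "r = 1")
  case True then show ?thesis by (simp add: sref_def)
next
  case False
  then have r2: "r \<ge> 2" using assms by simp
  show ?thesis
    unfolding sref_alt[OF r2]
    using dvd_two_adj[OF r2, of "j - i" "1 + j - i"] dvd_two_adj[OF r2, of "j - i" "j - i - 1"]
    by (auto simp: algebra_simps)
qed

lemma sref_less: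
  assumes r2: "r \<ge> 2" and "x \<noteq> y"
  shows "sref r a y < sref r a x \<longleftrightarrow>
          (y < x \<and> \<not>(int r dvd (y - a) \<and> x = y + 1)) \<or> (int r dvd (x - a) \<and> y = x + 1)"
proof -
  have h1: "x \<noteq> y + 2" if "int r dvd y - a" "int r dvd x - (1+a)"
    using that dvd_two_adj[OF r2, of "y - a" "x - (1+a)"] by auto
  have h2: "y \<noteq> x + 2" if "int r dvd x - a" "int r dvd y - (1+a)"
    using that dvd_two_adj[OF r2, of "x - a" "y - (1+a)"] by auto
  have h3: "x \<noteq> y + 1" if "int r dvd x - (1+a)" "\<not> int r dvd y - a"
    using that by (auto simp: algebra_simps)
  have h4: "y \<noteq> x + 1" if "int r dvd y - (1+a)" "\<not> int r dvd x - a"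
    using that by (auto simp: algebra_simps)
  have h5: "x \<noteq> y + 1" if "int r dvd y - a" "\<not> int r dvd x - (1 + a)"
    using that by (auto simp: algebra_simps)
  have h6: "y \<noteq> x + 1" if "int r dvd x - a" "\<not> int r dvd y - (1 + a)"
    using that by (auto simp: algebra_simps)
  have h7: "x \<noteq> y + 1" if "int r dvd y - a" "int r dvd x - a"
    using that dvd_two_adj[OF r2, of "y - a" "x - a"] by auto
  have h8: "y \<noteq> x + 1" if "int r dvd y - a" "int r dvd x - a"
    using that dvd_two_adj[OF r2, of "x - a" "y - a"] by auto
  have h9: "x \<noteq> y + 1" if "int r dvd y - (1+a)" "int r dvd x - (1+a)"
    using that dvd_two_adj[OF r2, of "y - (1+a)" "x - (1+a)"] by auto
  have h10: "y \<noteq> x + 1" if "int r dvd y - (1+a)" "int r dvd x - (1+a)"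
    using that dvd_two_adj[OF r2, of "x - (1+a)" "y - (1+a)"] by auto
  show ?thesis
    unfolding sref_alt[OF r2]
    using assms(2) h1 h2 h3 h4 h5 h6 h7 h8 h9 h10 by (auto simp: algebra_simps)
qed


lemma sref_a: "r \<ge> 2 \<Longrightarrow> sref r a a = a + 1"
  by (simp add: sref_alt)

lemma sref_a1: "r \<ge> 2 \<Longrightarrow> sref r a (a + 1) = a"
proof -
  assume r2: "r \<ge> 2"
  have "\<not> int r dvd 1" using r2 zdvd_imp_le[of "int r" 1] by auto
  then show ?thesis using r2 by (simp add: sref_alt)
qed

lemma sref_period: "r \<ge> 1 \<Longrightarrow> sref r a (j + int r) = sref r a j + int r"
proof (cases "r = 1")
  case True then show ?thesis by (simp add: sref_def)
next
  case False
  assume "r \<ge> 1"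
  then have r2: "r \<ge> 2" using False by simp
  have e1: "int r dvd (j + int r - a) \<longleftrightarrow> int r dvd (j - a)"
    by (metis add_diff_eq diff_add_eq dvd_add_left_iff dvd_refl)
  have e2: "int r dvd (j + int r - a - 1) \<longleftrightarrow> int r dvd (j - a - 1)"
    by (metis add_diff_eq diff_add_eq dvd_add_left_iff dvd_refl)
  show ?thesis unfolding sref_alt[OF r2] using e1 e2 by simp
qed

lemma aff_perm_sref: assumes "r \<ge> 1" shows "aff_perm r (sref r a)"
proof -
  have "sref r a \<circ> sref r a = id" using sref_inv[OF assms] by (simp add: fun_eq_iff)
  then have "bij (sref r a)" using o_bij by blast
  then show ?thesis unfolding aff_perm_def using sref_period[OF assms] by simp
qed

lemma aff_perm_comp: "aff_perm r f \<Longrightarrow> aff_perm r g \<Longrightarrow> aff_perm r (f \<circ> g)"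
  unfolding aff_perm_def by (simp add: bij_comp)

lemma aff_perm_rho: "aff_perm r (rho_pow a)"
proof -
  have "rho_pow a \<circ> rho_pow (-a) = id" "rho_pow (-a) \<circ> rho_pow a = id"
    by (auto simp: rho_pow_def fun_eq_iff)
  then have "bij (rho_pow a)" using o_bij by blast
  then show ?thesis unfolding aff_perm_def by (simp add: rho_pow_def)
qed

lemma word_prod_Cons: "word_prod r (i # ws) = sref r i \<circ> word_prod r ws"
  by (simp add: word_prod_def)

lemma word_prod_Nil: "word_prod r [] = id"
  by (simp add: word_prod_def)

lemma aff_perm_word: "r \<ge> 1 \<Longrightarrow> aff_perm r (word_prod r ws)"
proof (induction ws)
  case Nil then show ?case by (auto simp: word_prod_Nil aff_perm_def bij_def)
next
  case (Cons i ws) then show ?case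
    unfolding word_prod_Cons by (intro aff_perm_comp aff_perm_sref) auto
qed

lemma decomp_eq: "(t::int) = ((t - 1) mod m + 1) + ((t - 1) div m) * m"
  using div_mult_mod_eq[of "t - 1" m] by linarith

lemma decomp_bnd: assumes "r \<ge> (1::nat)" shows "1 \<le> (t - 1) mod int r + 1" "(t - 1) mod int r + 1 \<le> int r"
proof -
  have "0 < int r" using assms by simp
  then show "1 \<le> (t - 1) mod int r + 1" "(t - 1) mod int r + 1 \<le> int r"
    using pos_mod_sign[of "int r" "t - 1"] pos_mod_bound[of "int r" "t - 1"] by linarith+
qed

lemma invs_gen_finite:
  assumes r1: "r \<ge> 1" and u: "aff_perm r u"
  shows "finite {(s,t). 1 \<le> s \<and> s \<le> int r \<and> s < t \<and> u t < u s + c}"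
proof -
  define C where "C = (\<Sum>p\<in>{1..int r}. \<bar>u p\<bar>)"
  have Cb: "\<bar>u p\<bar> \<le> C" if "p \<in> {1..int r}" for p
    unfolding C_def by (rule member_le_sum) (use that in auto)
  have "{(s,t). 1 \<le> s \<and> s \<le> int r \<and> s < t \<and> u t < u s + c}
        \<subseteq> {1..int r} \<times> {1..int r + 2 * C + \<bar>c\<bar>}"
  proof clarify
    fix s t assume h: "1 \<le> s" "s \<le> int r" "s < t" "u t < u s + c"
    define k where "k = (t - 1) div int r"
    define t0 where "t0 = (t - 1) mod int r + 1"
    have tt: "t = t0 + k * int r" unfolding k_def t0_def by (rule decomp_eq)
    have t0b: "1 \<le> t0" "t0 \<le> int r" unfolding t0_def using decomp_bnd[OF r1] by auto
    have "u t = u t0 + k * int r" using tt aff_perm_period[OF u] by simp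
    moreover have "\<bar>u s\<bar> \<le> C" "\<bar>u t0\<bar> \<le> C" using Cb h t0b by auto
    ultimately have "k * int r < 2 * C + \<bar>c\<bar>" using h by linarith
    then show "s \<in> {1..int r} \<and> t \<in> {1..int r + 2 * C + \<bar>c\<bar>}" using h tt t0b by auto
  qed
  then show ?thesis by (rule finite_subset) auto
qed

lemma invs_finite: "r \<ge> 1 \<Longrightarrow> aff_perm r u \<Longrightarrow> finite (invs r u)"
  using invs_gen_finite[of r u 0] unfolding invs_def by simp

lemma same_rep:
  assumes "1 \<le> p" "p \<le> int r" "1 \<le> p'" "p' \<le> int r" "p - p' = m * int r"
  shows "m = 0"
proof (rule ccontr)
  assume "m \<noteq> 0"
  then consider "m \<ge> 1" | "m \<le> -1" by linarith
  then show False
  proof cases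
    case 1 then have "m * int r \<ge> 1 * int r" by (intro mult_right_mono) auto
    then show False using assms by linarith
  next
    case 2 then have "m * int r \<le> (-1) * int r" by (intro mult_right_mono) auto
    then show False using assms by linarith
  qed
qed

lemma left_mult:
  assumes r2: "r \<ge> 2" and u: "aff_perm r u" and uP: "u P = a" and uQ: "u Q = a + 1" and PQ: "P < Q"
  shows "card (invs r (sref r a \<circ> u)) = Suc (card (invs r u))"
proof -
  have r1: "r \<ge> 1" using r2 by simp
  have inj: "inj u" using u unfolding aff_perm_def bij_def by blast
  define k0 where "k0 = (P - 1) div int r"
  define p0 where "p0 = P - k0 * int r"
  define q0 where "q0 = Q - k0 * int r"
  have p0e: "p0 = (P - 1) mod int r + 1" unfolding p0_def k0_def
    using decomp_eq[of P "int r"] by linarith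
  have p0b: "1 \<le> p0" "p0 \<le> int r" unfolding p0e using decomp_bnd[OF r1] by auto
  have up0: "u p0 = a - k0 * int r" unfolding p0_def using aff_perm_period[OF u, of P "-k0"] uP by simp
  have uq0: "u q0 = a + 1 - k0 * int r" unfolding q0_def using aff_perm_period[OF u, of Q "-k0"] uQ by simp
  have pre: "p = P + m * int r" if "u p = a + m * int r" for p m
  proof -
    have "u (P + m * int r) = u p" using aff_perm_period[OF u, of P m] uP that by simp
    then show ?thesis using injD[OF inj] by metis
  qed
  have preQ: "q = Q + m * int r" if "u q = a + 1 + m * int r" for q m
  proof -
    have "u (Q + m * int r) = u q" using aff_perm_period[OF u, of Q m] uQ that by simp
    then show ?thesis using injD[OF inj] by metis
  qed
  have eq: "invs r (sref r a \<circ> u) = insert (p0, q0) (invs r u)"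
  proof (rule set_eqI, clarify)
    fix p q
    show "(p, q) \<in> invs r (sref r a \<circ> u) \<longleftrightarrow> (p, q) \<in> insert (p0, q0) (invs r u)"
    proof (cases "1 \<le> p \<and> p \<le> int r \<and> p < q")
      case False
      moreover have "p0 < q0" unfolding p0_def q0_def using PQ by simp
      ultimately show ?thesis using p0b unfolding invs_def by auto
    next
      case True
      then have ne: "u p \<noteq> u q" using inj by (metis injD less_irrefl)
      have A: "\<not> (int r dvd (u q - a) \<and> u p = u q + 1)"
      proof
        assume h: "int r dvd (u q - a) \<and> u p = u q + 1"
        then obtain m where m: "u q - a = int r * m" by (auto elim: dvdE)
        then have "q = P + m * int r" using pre[of q m] by (simp add: algebra_simps)
        moreover have "p = Q + m * int r" using preQ[of p m] m h by (simp add: algebra_simps)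
        ultimately show False using True PQ by simp
      qed
      have B: "(int r dvd (u p - a) \<and> u q = u p + 1) \<longleftrightarrow> (p, q) = (p0, q0)"
      proof
        assume h: "int r dvd (u p - a) \<and> u q = u p + 1"
        then obtain m where m: "u p - a = int r * m" by (auto elim: dvdE)
        then have pp: "p = P + m * int r" using pre[of p m] by (simp add: algebra_simps)
        have qq: "q = Q + m * int r" using preQ[of q m] m h by (simp add: algebra_simps)
        have "p - p0 = (m + k0) * int r" unfolding pp p0_def by (simp add: algebra_simps)
        then have "m + k0 = 0" using same_rep[of p r p0 "m + k0"] True p0b by simp
        then have "m = - k0" by simp
        then show "(p, q) = (p0, q0)" using pp qq unfolding p0_def q0_def by simp
      next
        assume "(p, q) = (p0, q0)"
        then show "int r dvd (u p - a) \<and> u q = u p + 1" using up0 uq0 by simp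
      qed
      have "(p, q) \<in> invs r (sref r a \<circ> u) \<longleftrightarrow> sref r a (u q) < sref r a (u p)"
        using True unfolding invs_def by simp
      also have "\<dots> \<longleftrightarrow> (u q < u p \<and> \<not>(int r dvd (u q - a) \<and> u p = u q + 1)) \<or> (int r dvd (u p - a) \<and> u q = u p + 1)"
        by (rule sref_less[OF r2 ne])
      also have "\<dots> \<longleftrightarrow> u q < u p \<or> (p, q) = (p0, q0)" using A B by blast
      also have "\<dots> \<longleftrightarrow> (p, q) \<in> insert (p0, q0) (invs r u)" using True unfolding invs_def by auto
      finally show ?thesis .
    qed
  qed
  have "(p0, q0) \<notin> invs r u" using up0 uq0 unfolding invs_def by simp
  then show ?thesis unfolding eq using invs_finite[OF r1 u] by simp
qed


lemma surj_aff: "aff_perm r u \<Longrightarrow> u (inv u y) = y"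
  unfolding aff_perm_def by (meson bij_inv_eq_iff)

lemma inj_aff: "aff_perm r u \<Longrightarrow> inj u"
  unfolding aff_perm_def bij_def by blast

lemma sref_r1: "r \<le> 1 \<Longrightarrow> sref r a = id"
  by (simp add: sref_def fun_eq_iff)

lemma sref_sref_comp: "r \<ge> 1 \<Longrightarrow> sref r a \<circ> (sref r a \<circ> u) = u"
  by (simp add: fun_eq_iff sref_inv)

lemma descent:
  assumes r2: "r \<ge> 2" and u: "aff_perm r u" and uP: "u P = a" and uQ: "u Q = a + 1" and QP: "Q < P"
  shows "card (invs r u) = Suc (card (invs r (sref r a \<circ> u)))"
proof -
  have r1: "r \<ge> 1" using r2 by simp
  define u' where "u' = sref r a \<circ> u"
  have u': "aff_perm r u'" unfolding u'_def by (intro aff_perm_comp aff_perm_sref u r1)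
  have "u' Q = a" "u' P = a + 1" unfolding u'_def using uP uQ sref_a[OF r2] sref_a1[OF r2] by auto
  from left_mult[OF r2 u' this QP] show ?thesis
    unfolding u'_def sref_sref_comp[OF r1] .
qed

lemma ninv_le:
  assumes r1: "r \<ge> 1" and u: "aff_perm r u"
  shows "card (invs r (sref r a \<circ> u)) \<le> card (invs r u) + 1"
proof (cases "r = 1")
  case True then show ?thesis by (simp add: sref_r1)
next
  case False
  then have r2: "r \<ge> 2" using r1 by simp
  define P where "P = inv u a"
  define Q where "Q = inv u (a + 1)"
  have uP: "u P = a" and uQ: "u Q = a + 1" unfolding P_def Q_def using surj_aff[OF u] by auto
  then have "P \<noteq> Q" by auto
  then consider "P < Q" | "Q < P" by linarith
  then show ?thesis
  proof cases
    case 1 show ?thesis using left_mult[OF r2 u uP uQ 1] by simp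
  next
    case 2 show ?thesis using descent[OF r2 u uP uQ 2] by simp
  qed
qed

lemma invs_rho: "invs r (rho_pow a \<circ> u) = invs r u"
  by (simp add: invs_def rho_pow_def)

lemma invs_id: "invs r id = {}"
  by (auto simp: invs_def)

lemma word_bound:
  assumes r1: "r \<ge> 1"
  shows "card (invs r (rho_pow a \<circ> word_prod r ws)) \<le> length ws"
proof (induction ws)
  case Nil then show ?case unfolding word_prod_Nil invs_rho invs_id by simp
next
  case (Cons i ws)
  have "card (invs r (rho_pow a \<circ> word_prod r (i # ws))) = card (invs r (word_prod r (i # ws)))"
    by (simp only: invs_rho)
  also have "\<dots> = card (invs r (sref r i \<circ> word_prod r ws))"
    by (simp only: word_prod_Cons)
  also have "\<dots> \<le> card (invs r (word_prod r ws)) + 1"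
    by (rule ninv_le[OF r1 aff_perm_word[OF r1]])
  also have "card (invs r (word_prod r ws)) = card (invs r (rho_pow a \<circ> word_prod r ws))"
    by (simp only: invs_rho)
  finally have X: "card (invs r (rho_pow a \<circ> word_prod r (i # ws))) \<le> card (invs r (rho_pow a \<circ> word_prod r ws)) + 1" .
  show ?case using X Cons.IH by (simp only: list.size)
qed

lemma sref_rho: "sref r a \<circ> rho_pow b = rho_pow b \<circ> sref r (a - b)"
proof (cases "r \<le> 1")
  case True then show ?thesis by (simp add: sref_r1)
next
  case False then have r2: "r \<ge> 2" by simp
  show ?thesis unfolding fun_eq_iff
  proof
    fix j
    have e1: "j + b - a = j - (a - b)" "j + b - a - 1 = j - (a - b) - 1" by simp_all
    show "(sref r a \<circ> rho_pow b) j = (rho_pow b \<circ> sref r (a - b)) j"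
      unfolding comp_apply rho_pow_def sref_alt[OF r2] e1 by simp
  qed
qed

lemma mod_norm: "((c - 1) mod m + 1) mod m = (c::int) mod m"
  using mod_add_left_eq[of "c - 1" m 1] by simp

lemma mod_norm1: "((c - 1) mod m + 1 + 1) mod m = ((c::int) + 1) mod m"
  using mod_add_left_eq[of "c - 1" m 2] by (simp add: add.assoc add.commute)

lemma sref_norm: "sref r c = sref r ((c - 1) mod int r + 1)"
  unfolding sref_def fun_eq_iff mod_norm mod_norm1 by simp

lemma strict_mono_succ:
  fixes f :: "int \<Rightarrow> int"
  assumes "\<And>x. f x < f (x + 1)" and xy: "x < y"
  shows "f x < f y"
proof -
  have gen: "f x < f (x + int (Suc k))" for k
  proof (induction k)
    case 0 then show ?case using assms(1)[of x] by simp
  next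
    case (Suc k)
    have A: "f (x + int (Suc k)) < f (x + int (Suc k) + 1)" by (rule assms(1))
    have h: "f (x + int (Suc (Suc k))) = f (x + int (Suc k) + 1)" by (rule arg_cong[where f=f]) simp
    show ?case using Suc.IH A h by linarith
  qed
  have e: "y = x + int (Suc (nat (y - x - 1)))" using xy by simp
  show ?thesis using gen[of "nat (y - x - 1)"] e by simp
qed

lemma incr_is_shift:
  assumes u: "aff_perm r u" and inc: "\<And>x. u x < u (x + 1)"
  shows "u = rho_pow (u 0)"
proof -
  have mono: "u x < u y" if "x < y" for x y using strict_mono_succ[of u, OF inc that] .
  have step: "u (x + 1) = u x + 1" for x
  proof (rule ccontr)
    assume "u (x + 1) \<noteq> u x + 1"
    then have gt: "u (x + 1) > u x + 1" using inc[of x] by simp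
    define z where "z = inv u (u x + 1)"
    have uz: "u z = u x + 1" unfolding z_def using surj_aff[OF u] by simp
    show False
    proof (cases "z \<le> x")
      case True
      have "u z \<le> u x"
      proof (cases "z = x")
        case True then show ?thesis by simp
      next
        case False then show ?thesis using mono[of z x] \<open>z \<le> x\<close> by simp
      qed
      then show False using uz by simp
    next
      case False
      then have zx: "x + 1 \<le> z" by simp
      have "u (x + 1) \<le> u z"
      proof (cases "z = x + 1")
        case True then show ?thesis by simp
      next
        case False then show ?thesis using mono[of "x + 1" z] zx by simp
      qed
      then show False using uz gt by simp
    qed
  qed
  have lin: "u x = x + u 0" for x
  proof (induction x rule: int_induct[where k=0])
    case base then show ?case by simp
  next
    case (step1 i) 
    have "u (i + 1) = u i + 1" by (rule step)
    then show ?case using step1 by simp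
  next
    case (step2 i)
    have "u (i - 1 + 1) = u (i - 1) + 1" by (rule step)
    then show ?case using step2 by simp
  qed
  show ?thesis unfolding fun_eq_iff rho_pow_def
  proof
    fix x show "u x = x + u 0" by (rule lin)
  qed
qed

lemma invs_empty_incr:
  assumes r1: "r \<ge> 1" and u: "aff_perm r u" and e: "invs r u = {}"
  shows "u x < u (x + 1)"
proof -
  define k where "k = (x - 1) div int r"
  define x0 where "x0 = (x - 1) mod int r + 1"
  have xx: "x = x0 + k * int r" unfolding k_def x0_def by (rule decomp_eq)
  have b: "1 \<le> x0" "x0 \<le> int r" unfolding x0_def using decomp_bnd[OF r1] by auto
  have "(x0, x0 + 1) \<notin> invs r u" using e by simp
  then have "u x0 \<le> u (x0 + 1)" using b unfolding invs_def by auto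
  moreover have "u x0 \<noteq> u (x0 + 1)"
  proof
    assume "u x0 = u (x0 + 1)"
    then have "x0 = x0 + 1" using injD[OF inj_aff[OF u]] by blast
    then show False by simp
  qed
  ultimately have "u x0 < u (x0 + 1)" by simp
  moreover have "u (x + 1) = u (x0 + 1) + k * int r" using aff_perm_period[OF u, of "x0 + 1" k] xx
    by (simp add: algebra_simps)
  moreover have "u x = u x0 + k * int r" using aff_perm_period[OF u, of x0 k] xx by simp
  ultimately show ?thesis by simp
qed

lemma incr_invs_empty:
  assumes inc: "\<And>x. w x < w (x + 1)" shows "invs r w = {}"
  using strict_mono_succ[of w, OF inc] unfolding invs_def by fastforce

lemma rep_exists:
  assumes r1: "r \<ge> 1"
  shows "aff_perm r w \<Longrightarrow> card (invs r w) = N \<Longrightarrow>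
     \<exists>a ws. length ws = N \<and> set ws \<subseteq> {1..int r} \<and> w = rho_pow a \<circ> word_prod r ws"
proof (induction N arbitrary: w)
  case 0
  then have "invs r w = {}" using invs_finite[OF r1] by auto
  then have "w = rho_pow (w 0)" using incr_is_shift[OF 0(1)] invs_empty_incr[OF r1 0(1)] by blast
  then have "w = rho_pow (w 0) \<circ> word_prod r []" by (simp add: word_prod_Nil)
  then show ?case by (intro exI[of _ "w 0"] exI[of _ "[]::int list"]) simp
next
  case (Suc N)
  have w: "aff_perm r w" by fact
  have ne: "invs r w \<noteq> {}" using Suc.prems(2) by auto
  have injw: "inj w" using inj_aff[OF w] .
  have ginj: "x = y" if "inv w x = inv w y" for x y
  proof -
    have "w (inv w x) = w (inv w y)" using that by simp
    then show ?thesis using surj_aff[OF w] by simp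
  qed
  obtain a where desc: "inv w (a + 1) < inv w a"
  proof (rule ccontr)
    assume "\<not> thesis"
    then have "\<not> inv w (a + 1) < inv w a" for a using that by blast
    moreover have "inv w (a + 1) \<noteq> inv w a" for a using ginj[of "a + 1" a] by auto
    ultimately have inc: "inv w a < inv w (a + 1)" for a by (meson linorder_neqE)
    have "invs r w = {}"
    proof (rule ccontr)
      assume "invs r w \<noteq> {}"
      then obtain s t where st: "s < t" "w t < w s" unfolding invs_def by auto
      have "inv w (w t) < inv w (w s)" using strict_mono_succ[of "inv w", OF inc st(2)] .
      then show False using st(1) inv_f_f[OF injw] by simp
    qed
    then show False using ne by simp
  qed
  have r2: "r \<ge> 2"
  proof (rule ccontr)
    assume "\<not> r \<ge> 2"
    then have "r = 1" using r1 by simp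
    then have "w (x + 1) = w x + 1" for x using w unfolding aff_perm_def by simp
    then have "invs r w = {}" by (intro incr_invs_empty) simp
    then show False using ne by simp
  qed
  define P where "P = inv w a"
  define Q where "Q = inv w (a + 1)"
  have wP: "w P = a" and wQ: "w Q = a + 1" unfolding P_def Q_def using surj_aff[OF w] by auto
  have QP: "Q < P" using desc unfolding P_def Q_def .
  define u where "u = sref r a \<circ> w"
  have u: "aff_perm r u" unfolding u_def by (intro aff_perm_comp aff_perm_sref w r1)
  have cu: "card (invs r u) = N" using descent[OF r2 w wP wQ QP] Suc.prems(2) unfolding u_def by simp
  obtain b ws where ws: "length ws = N" "set ws \<subseteq> {1..int r}" "u = rho_pow b \<circ> word_prod r ws"
    using Suc.IH[OF u cu] by blast
  define i where "i = (a - b - 1) mod int r + 1"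
  have ib: "i \<in> {1..int r}" unfolding i_def using decomp_bnd[OF r1] by auto
  have "w = sref r a \<circ> u" unfolding u_def sref_sref_comp[OF r1] ..
  also have "\<dots> = (sref r a \<circ> rho_pow b) \<circ> word_prod r ws" unfolding ws(3) by (simp add: comp_assoc)
  also have "\<dots> = rho_pow b \<circ> (sref r (a - b) \<circ> word_prod r ws)" unfolding sref_rho by (simp add: comp_assoc)
  also have "\<dots> = rho_pow b \<circ> word_prod r (i # ws)" unfolding word_prod_Cons i_def
    using sref_norm[of r "a - b"] by simp
  finally show ?case using ws ib by (intro exI[of _ b] exI[of _ "i # ws"]) auto
qed

lemma aff_len_eq:
  assumes r1: "r \<ge> 1" and w: "aff_perm r w"
  shows "aff_len r w = card (invs r w)"
proof -
  define Pk where "Pk = (\<lambda>k. \<exists>a ws. length ws = k \<and> set ws \<subseteq> {1..int r}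
                        \<and> w = rho_pow a \<circ> word_prod r ws)"
  have al: "aff_len r w = Least Pk" unfolding aff_len_def Pk_def ..
  have P1: "Pk (card (invs r w))" unfolding Pk_def using rep_exists[OF r1 w refl] .
  then have le: "Least Pk \<le> card (invs r w)" by (rule Least_le)
  have "Pk (Least Pk)" using P1 by (rule LeastI)
  then obtain a ws where h1: "length ws = Least Pk" and h2: "w = rho_pow a \<circ> word_prod r ws"
    unfolding Pk_def by blast
  have "card (invs r w) \<le> length ws" unfolding h2 by (rule word_bound[OF r1])
  then have "card (invs r w) \<le> Least Pk" using h1 by simp
  then show ?thesis using al le by linarith
qed

definition Bo :: "nat \<Rightarrow> nat \<Rightarrow> (int \<Rightarrow> nat) \<Rightarrow> int \<Rightarrow> int" where
  "Bo n r lam m = lam_off r lam ((m - 1) div int n) ((m - 1) mod int n + 1)"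

lemma sum_split_top:
  fixes f :: "int \<Rightarrow> int" assumes "1 \<le> i"
  shows "(\<Sum>t=1..i. f t) = (\<Sum>t=1..i - 1. f t) + f i"
proof -
  have "{1..i} = insert i {1..i - 1}" using assms by auto
  then show ?thesis by (simp add: add.commute)
qed

lemma divmod_triv:
  fixes k i n :: int assumes "0 \<le> i" "i < n"
  shows "(k * n + i) div n = k" "(k * n + i) mod n = i"
  using assms by (simp_all add: add.commute)

context
  fixes n r :: nat and lam :: "int \<Rightarrow> nat"
  assumes n1: "n \<ge> 1" and rr1: "r \<ge> 1" and lamL: "lam \<in> Lam n r"
begin

lemma lam_per1: "lam (x + int n) = lam x"
  using lamL unfolding Lam_def by simp

lemma lam_per: "lam (x + k * int n) = lam x"
proof (induction k rule: int_induct[where k=0])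
  case base then show ?case by simp
next
  case (step1 i)
  have "lam (x + (i + 1) * int n) = lam ((x + i * int n) + int n)" by (simp add: algebra_simps)
  then show ?case using step1 lam_per1 by simp
next
  case (step2 i)
  have "lam (x + i * int n) = lam ((x + (i - 1) * int n) + int n)" by (simp add: algebra_simps)
  then show ?case using step2 lam_per1 by simp
qed

lemma lam_norm: "lam ((m - 1) mod int n + 1) = lam m"
proof -
  have "m = ((m - 1) mod int n + 1) + ((m - 1) div int n) * int n" by (rule decomp_eq)
  then show ?thesis using lam_per[of "(m - 1) mod int n + 1" "(m - 1) div int n"] by simp
qed

lemma lam_sum: "(\<Sum>t=1..int n. int (lam t)) = int r"
  using lamL unfolding Lam_def by (simp flip: of_nat_sum)

lemma Rblock_eq: "Rblock n r lam m = {Bo n r lam m + 1 .. Bo n r lam m + int (lam m)}"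
  unfolding Rblock_def Bo_def Let_def lam_norm ..

lemma Bo_succ: "Bo n r lam (m + 1) = Bo n r lam m + int (lam m)"
proof -
  define k where "k = (m - 1) div int n"
  define i where "i = (m - 1) mod int n + 1"
  have mm: "m = i + k * int n" unfolding i_def k_def using decomp_eq[of m "int n"] by simp
  have ib: "1 \<le> i" "i \<le> int n" unfolding i_def using decomp_bnd[OF n1] by auto
  have Bm: "Bo n r lam m = k * int r + (\<Sum>t=1..i - 1. int (lam t))"
    unfolding Bo_def lam_off_def k_def i_def by simp
  have lm: "lam m = lam i" unfolding mm by (rule lam_per)
  show ?thesis
  proof (cases "i < int n")
    case True
    have "(m + 1 - 1) div int n = k" "(m + 1 - 1) mod int n = i"
      using divmod_triv[of i "int n" k] True ib unfolding mm by (simp_all add: algebra_simps)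
    then have "Bo n r lam (m + 1) = k * int r + (\<Sum>t=1..i. int (lam t))"
      unfolding Bo_def lam_off_def by simp
    then show ?thesis using Bm lm sum_split_top[OF ib(1), of "\<lambda>t. int (lam t)"] by simp
  next
    case False
    then have iN: "i = int n" using ib by simp
    have "(m + 1 - 1) div int n = k + 1" "(m + 1 - 1) mod int n = 0"
      unfolding mm iN using n1 by (simp_all add: algebra_simps)
    then have "Bo n r lam (m + 1) = (k + 1) * int r" unfolding Bo_def lam_off_def by simp
    moreover have "(\<Sum>t=1..i - 1. int (lam t)) + int (lam i) = int r"
      using sum_split_top[OF ib(1), of "\<lambda>t. int (lam t)"] lam_sum iN by simp
    ultimately show ?thesis using Bm lm by (simp add: algebra_simps)
  qed
qed

lemma Bo_shift: "Bo n r lam (m + k * int n) = Bo n r lam m + k * int r"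
proof -
  have e: "m + k * int n - 1 = (m - 1) + k * int n" by simp
  have "(m + k * int n - 1) div int n = (m - 1) div int n + k"
       "(m + k * int n - 1) mod int n = (m - 1) mod int n"
    unfolding e using n1 by simp_all
  then show ?thesis unfolding Bo_def lam_off_def by (simp add: algebra_simps)
qed

lemma Bo_one: "Bo n r lam 1 = 0"
  unfolding Bo_def lam_off_def by simp

lemma Bo_mono_nat: "Bo n r lam m \<le> Bo n r lam (m + int j)"
proof (induction j)
  case 0 then show ?case by simp
next
  case (Suc j)
  have eq: "m + int (Suc j) = (m + int j) + 1" by simp
  show ?case unfolding eq Bo_succ using Suc by simp
qed

lemma Bo_mono: "m \<le> m' \<Longrightarrow> Bo n r lam m \<le> Bo n r lam m'"
  using Bo_mono_nat[of m "nat (m' - m)"] by simp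

lemma Bo_exists_aux: "Bo n r lam m1 < x \<Longrightarrow> x \<le> Bo n r lam (m1 + int d) \<Longrightarrow>
    \<exists>m. Bo n r lam m < x \<and> x \<le> Bo n r lam (m + 1)"
proof (induction d arbitrary: m1)
  case 0 then show ?case by simp
next
  case (Suc d)
  show ?case
  proof (cases "x \<le> Bo n r lam (m1 + 1)")
    case True then show ?thesis using Suc.prems by blast
  next
    case False
    have "x \<le> Bo n r lam ((m1 + 1) + int d)" using Suc.prems(2) by (simp add: add.assoc)
    then show ?thesis using Suc.IH[of "m1 + 1"] False by simp
  qed
qed

lemma Bo_exists: "\<exists>m. Bo n r lam m < x \<and> x \<le> Bo n r lam (m + 1)"
proof -
  define k1 where "k1 = - \<bar>x\<bar> - 1"
  define k2 where "k2 = \<bar>x\<bar>"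
  have e1: "Bo n r lam (1 + k1 * int n) = k1 * int r" using Bo_shift[of 1 k1] Bo_one by simp
  have e2: "Bo n r lam (1 + k2 * int n) = k2 * int r" using Bo_shift[of 1 k2] Bo_one by simp
  have "k1 * int r \<le> k1 * 1" using rr1 unfolding k1_def by (intro mult_left_mono_neg) auto
  then have lo: "Bo n r lam (1 + k1 * int n) < x" using e1 unfolding k1_def by simp
  have "k2 * 1 \<le> k2 * int r" using rr1 unfolding k2_def by (intro mult_left_mono) auto
  then have hi: "x \<le> Bo n r lam (1 + k2 * int n)" using e2 unfolding k2_def by simp
  have "k1 * int n \<le> k2 * int n" unfolding k1_def k2_def by (intro mult_right_mono) auto
  then have "1 + k2 * int n = (1 + k1 * int n) + int (nat (k2 * int n - k1 * int n))" by simp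
  then show ?thesis using Bo_exists_aux[OF lo] hi by metis
qed

lemma Rblock_mem: "x \<in> Rblock n r lam m \<longleftrightarrow> Bo n r lam m < x \<and> x \<le> Bo n r lam (m + 1)"
  unfolding Rblock_eq Bo_succ by auto

lemma i_lam_eq:
  assumes "Bo n r lam m < x" "x \<le> Bo n r lam (m + 1)"
  shows "i_lam n r lam x = m"
  unfolding i_lam_def
proof (rule the_equality)
  show "x \<in> Rblock n r lam m" using assms Rblock_mem by simp
next
  fix m' assume "x \<in> Rblock n r lam m'"
  then have h: "Bo n r lam m' < x" "x \<le> Bo n r lam (m' + 1)" using Rblock_mem by auto
  show "m' = m"
  proof (rule ccontr)
    assume "m' \<noteq> m"
    then consider "m' + 1 \<le> m" | "m + 1 \<le> m'" by linarith
    then show False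
    proof cases
      case 1 then show False using Bo_mono[OF 1] h assms by simp
    next
      case 2 then show False using Bo_mono[OF 2] h assms by simp
    qed
  qed
qed

lemma I_bounds: "Bo n r lam (i_lam n r lam x) < x \<and> x \<le> Bo n r lam (i_lam n r lam x + 1)"
  using Bo_exists[of x] i_lam_eq by blast

lemma I_mem: "x \<in> Rblock n r lam m \<longleftrightarrow> i_lam n r lam x = m"
  using Rblock_mem I_bounds i_lam_eq by metis

lemma I_mono:
  assumes "x \<le> y" shows "i_lam n r lam x \<le> i_lam n r lam y"
proof (rule ccontr)
  assume "\<not> ?thesis"
  then have "i_lam n r lam y + 1 \<le> i_lam n r lam x" by simp
  from Bo_mono[OF this] show False using I_bounds[of x] I_bounds[of y] assms by simp
qed

lemma I_shift: "i_lam n r lam (x + k * int r) = i_lam n r lam x + k * int n"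
proof (rule i_lam_eq)
  show "Bo n r lam (i_lam n r lam x + k * int n) < x + k * int r"
    using Bo_shift I_bounds[of x] by simp
  have "Bo n r lam (i_lam n r lam x + k * int n + 1) = Bo n r lam (i_lam n r lam x + 1) + k * int r"
    using Bo_shift[of "i_lam n r lam x + 1" k] by (simp add: algebra_simps)
  then show "x + k * int r \<le> Bo n r lam (i_lam n r lam x + k * int n + 1)"
    using I_bounds[of x] by simp
qed

lemma I_far:
  assumes "x + int r \<le> y" shows "i_lam n r lam x < i_lam n r lam y"
proof -
  have "i_lam n r lam (x + 1 * int r) \<le> i_lam n r lam y" using I_mono assms by simp
  then show ?thesis using I_shift[of x 1] n1 by simp
qed

end

lemma find_ascent:
  fixes f :: "int \<Rightarrow> int"
  shows "f x < f (x + int d) \<Longrightarrow> \<exists>a. x \<le> a \<and> a < x + int d \<and> f a < f (a + 1)"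
proof (induction d arbitrary: x)
  case 0 then show ?case by simp
next
  case (Suc d)
  show ?case
  proof (cases "f x < f (x + 1)")
    case True then show ?thesis by (intro exI[of _ x]) simp
  next
    case False
    have e: "x + int (Suc d) = (x + 1) + int d" by simp
    have "f (x + 1) < f ((x + 1) + int d)" using False Suc.prems unfolding e by simp
    from Suc.IH[OF this] obtain a where "x + 1 \<le> a" "a < x + 1 + int d" "f a < f (a + 1)" by blast
    then show ?thesis unfolding e by (intro exI[of _ a]) simp
  qed
qed

context
  fixes n r :: nat and lam :: "int \<Rightarrow> nat"
  assumes n1: "n \<ge> 1" and rr1: "r \<ge> 1" and lamL: "lam \<in> Lam n r"
begin

lemma Young_I:
  assumes w: "w \<in> Young n r lam" shows "i_lam n r lam (w x) = i_lam n r lam x"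
proof -
  have wa: "aff_perm r w" using w unfolding Young_def by simp
  define m where "m = i_lam n r lam x"
  define m0 where "m0 = (m - 1) mod int n + 1"
  define k where "k = (m - 1) div int n"
  have mm: "m = m0 + k * int n" unfolding m0_def k_def by (rule decomp_eq)
  have m0b: "m0 \<in> {1..int n}" unfolding m0_def using decomp_bnd[OF n1] by auto
  define x' where "x' = x + (- k) * int r"
  have "i_lam n r lam x' = m0" unfolding x'_def
    using I_shift[OF n1 rr1 lamL, of x "-k"] mm m_def by simp
  then have "x' \<in> Rblock n r lam m0" using I_mem[OF n1 rr1 lamL] by simp
  then have "w x' \<in> Rblock n r lam m0" using w m0b unfolding Young_def by blast
  then have Iw: "i_lam n r lam (w x') = m0" using I_mem[OF n1 rr1 lamL] by simp
  have "x = x' + k * int r" unfolding x'_def by simp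
  then have "w x = w x' + k * int r" using aff_perm_period[OF wa] by simp
  then have "i_lam n r lam (w x) = m0 + k * int n" using I_shift[OF n1 rr1 lamL] Iw by simp
  then show ?thesis using mm m_def by simp
qed

lemma Young_comp: "v \<in> Young n r lam \<Longrightarrow> w \<in> Young n r lam \<Longrightarrow> v \<circ> w \<in> Young n r lam"
  unfolding Young_def using aff_perm_comp by auto

lemma sref_Young:
  assumes r2: "r \<ge> 2" and eq: "i_lam n r lam a = i_lam n r lam (a + 1)"
  shows "sref r a \<in> Young n r lam"
proof -
  have keep: "i_lam n r lam (sref r a j) = i_lam n r lam j" for j
  proof -
    consider "int r dvd (j - a)" | "\<not> int r dvd (j - a)" "int r dvd (j - a - 1)"
      | "\<not> int r dvd (j - a)" "\<not> int r dvd (j - a - 1)" by blast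
    then show ?thesis
    proof cases
      case 1
      then obtain q where q: "j - a = int r * q" by (auto elim: dvdE)
      have j: "j = a + q * int r" using q by (simp add: algebra_simps)
      have j1: "j + 1 = (a + 1) + q * int r" using j by simp
      have "sref r a j = j + 1" using 1 by (simp add: sref_alt[OF r2])
      then show ?thesis unfolding j1 using I_shift[OF n1 rr1 lamL] eq j
        by (metis j1)
    next
      case 2
      then obtain q where q: "j - a - 1 = int r * q" by (auto elim: dvdE)
      have j: "j = (a + 1) + q * int r" using q by (simp add: algebra_simps)
      have j1: "j - 1 = a + q * int r" using j by simp
      have "sref r a j = j - 1" using 2 by (simp add: sref_alt[OF r2])
      then show ?thesis using I_shift[OF n1 rr1 lamL] eq j j1 by metis
    next
      case 3 then show ?thesis by (simp add: sref_alt[OF r2])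
    qed
  qed
  show ?thesis unfolding Young_def
    using aff_perm_sref[OF rr1] keep I_mem[OF n1 rr1 lamL] by auto
qed

end

theorem corollary3p2p4:
  fixes n r :: nat and lam :: "int \<Rightarrow> nat" and d dplus :: "int \<Rightarrow> int"
  assumes "n \<ge> 1" and "r \<ge> 1"
    and "lam \<in> Lam n r"
    and "d \<in> Dmin n r lam"
    and "dplus \<in> (\<lambda>w. w \<circ> d) ` Young n r lam"
    and "\<forall>x\<in>(\<lambda>w. w \<circ> d) ` Young n r lam. aff_len r x \<le> aff_len r dplus"
  shows "finite (Inv r (seq_act (i_lam n r lam) d))
         \<and> card (Inv r (seq_act (i_lam n r lam) d)) = aff_len r dplus"
proof -
  note n1 = assms(1) and r1 = assms(2) and lamL = assms(3)
  define I where "I = i_lam n r lam"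
  have da: "aff_perm r d" using assms(4) unfolding Dmin_def by simp
  obtain w where w: "w \<in> Young n r lam" and dp: "dplus = w \<circ> d" using assms(5) by blast
  have wa: "aff_perm r w" using w unfolding Young_def by simp
  have ua: "aff_perm r dplus" unfolding dp using aff_perm_comp[OF wa da] .
  define S where "S = Inv r (seq_act I d)"
  have Sd: "S = Inv r (I \<circ> dplus)"
    unfolding S_def seq_act_def dp I_def using Young_I[OF n1 r1 lamL w] by (simp add: comp_def)
  have fin: "finite S"
  proof -
    have "S \<subseteq> {(s,t). 1 \<le> s \<and> s \<le> int r \<and> s < t \<and> d t < d s + int r}"
    proof clarify
      fix s t assume "(s, t) \<in> S"
      then have h: "1 \<le> s" "s \<le> int r" "s < t" "I (d t) \<le> I (d s)"
        unfolding S_def Inv_def seq_act_def by auto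
      have "d t < d s + int r"
      proof (rule ccontr)
        assume "\<not> ?thesis"
        then have "I (d s) < I (d t)" unfolding I_def by (intro I_far[OF n1 r1 lamL]) simp
        then show False using h by simp
      qed
      then show "1 \<le> s \<and> s \<le> int r \<and> s < t \<and> d t < d s + int r" using h by simp
    qed
    then show ?thesis using invs_gen_finite[OF r1 da, of "int r"] finite_subset by blast
  qed
  have sub: "invs r dplus \<subseteq> S"
    unfolding Sd invs_def Inv_def I_def using I_mono[OF n1 r1 lamL] by auto
  have len: "aff_len r dplus = card (invs r dplus)" by (rule aff_len_eq[OF r1 ua])
  have le1: "card (invs r dplus) \<le> card S" using card_mono[OF fin sub] .
  have le2: "card S \<le> card (invs r dplus)"
  proof (rule ccontr)
    assume "\<not> ?thesis"
    then have "invs r dplus \<noteq> S" by auto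
    then obtain p q where pq: "(p, q) \<in> S" "(p, q) \<notin> invs r dplus" using sub by auto
    then have h: "1 \<le> p" "p \<le> int r" "p < q" "I (dplus q) \<le> I (dplus p)" "\<not> dplus q < dplus p"
      unfolding Sd Inv_def invs_def by auto
    have injd: "inj dplus" using inj_aff[OF ua] .
    have "dplus p \<noteq> dplus q" using h(3) injD[OF injd] by (metis less_irrefl)
    then have lt: "dplus p < dplus q" using h(5) by simp
    have Ieq: "I (dplus p) = I (dplus q)" using h(4) I_mono[OF n1 r1 lamL, of "dplus p" "dplus q"] lt
      unfolding I_def by simp
    define g where "g = inv dplus"
    have gp: "g (dplus p) = p" and gq: "g (dplus q) = q" unfolding g_def using inv_f_f[OF injd] by auto
    have e: "dplus q = dplus p + int (nat (dplus q - dplus p))" using lt by simp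
    have "g (dplus p) < g (dplus p + int (nat (dplus q - dplus p)))" using gp gq h(3) e by simp
    from find_ascent[OF this] obtain a where a: "dplus p \<le> a" "a < dplus q" "g a < g (a + 1)"
      using e by auto
    have Ia: "I a = I (a + 1)"
    proof -
      have "I (dplus p) \<le> I a" "I a \<le> I (a + 1)" "I (a + 1) \<le> I (dplus q)"
        using a I_mono[OF n1 r1 lamL] unfolding I_def by auto
      then show ?thesis using Ieq by simp
    qed
    have r2: "r \<ge> 2"
    proof (rule ccontr)
      assume "\<not> r \<ge> 2" then have "r = 1" using r1 by simp
      then have "dplus p + int r \<le> dplus q" using lt by simp
      then have "I (dplus p) < I (dplus q)" unfolding I_def by (rule I_far[OF n1 r1 lamL])
      then show False using Ieq by simp
    qed
    have sY: "sref r a \<in> Young n r lam" using sref_Young[OF n1 r1 lamL r2] Ia unfolding I_def by simp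
    have vY: "sref r a \<circ> w \<in> Young n r lam" by (rule Young_comp[OF n1 r1 lamL sY w])
    then have "(sref r a \<circ> w) \<circ> d \<in> (\<lambda>w. w \<circ> d) ` Young n r lam" by blast
    then have "aff_len r ((sref r a \<circ> w) \<circ> d) \<le> aff_len r dplus" using assms(6) by blast
    moreover have "(sref r a \<circ> w) \<circ> d = sref r a \<circ> dplus" unfolding dp by (simp add: comp_assoc)
    moreover have "aff_len r (sref r a \<circ> dplus) = card (invs r (sref r a \<circ> dplus))"
      by (rule aff_len_eq[OF r1 aff_perm_comp[OF aff_perm_sref[OF r1] ua]])
    moreover have "card (invs r (sref r a \<circ> dplus)) = Suc (card (invs r dplus))"
    proof (rule left_mult[OF r2 ua])
      show "dplus (g a) = a" "dplus (g (a + 1)) = a + 1" unfolding g_def using surj_aff[OF ua] by auto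
      show "g a < g (a + 1)" by (rule a(3))
    qed
    ultimately show False using len by simp
  qed
  show ?thesis using fin le1 le2 len unfolding S_def I_def by simp
qed

end
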